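(* Let $V$ be a finite nonempty set and $f:\{0,1\}^V\to\{0,1\}^V$ an and-net. (1) Every subnetwork of $f$ has a unique fixed point if and only if every chordless cycle of $G(f)$ has a delocalizing vertex. (2) Every subnetwork of $f$ has at most one fixed point if and only if every chordless positive cycle of $G(f)$ has a delocalizing vertex.
   Context: For nonempty $I\subseteq V$ and $z\in\{0,1\}^{V\setminus I}$, the subnetwork of $f$ induced by $z$ is $h:\{0,1\}^I\to\{0,1\}^I$ with $h(x|_I)=f(x)|_I$ for all $x$ whose restriction to $V\setminus I$ is $z$ ($f$ is a subnetwork of itself). For $x^{j\alpha}$ the point equal to $x$ except its $j$-component is $\alpha$, the global interaction graph $G(f)$ is the signed digraph on $V$ with a positive (resp. negative) arc from $j$ to $i$ iff $f_i(x^{j1})-f_i(x^{j0})=1$ (resp. $=-1$) for at least one $x$. $f$ is an and-net if $G(f)$ has at most one arc from $j$ to $i$ for all $i,j$ and for every $i$ and $x$: $f_i(x)=1$ iff $G(f)$ has no positive arc $j\to i$ with $x_j=0$ and no negative arc $j\to i$ with $x_j=1$. A cycle is a subgraph whose underlying unsigned digraph is a directed cycle (loops are cycles of length 1); positive if it has an even number of negative arcs; chordless if its underlying unsigned digraph is an induced subgraph of that of $G(f)$. A vertex $v$ (possibly on $C$) is a delocalizing vertex of a cycle $C$ if $G(f)$ has a positive arc from $v$ to a vertex of $C$ and a negative arc from $v$ to a different vertex of $C$. *)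

theory Defs
  imports "HOL-Library.FuncSet"
begin

text \<open>The vertex set V is a finite type 'v (types are nonempty).
  Configurations in {0,1}^V are functions 'v \<Rightarrow> bool (True = 1).\<close>

type_synonym 'v bnet = "('v \<Rightarrow> bool) \<Rightarrow> ('v \<Rightarrow> bool)"

definition pos_arc :: "'v bnet \<Rightarrow> 'v \<Rightarrow> 'v \<Rightarrow> bool" where
  "pos_arc f j i \<longleftrightarrow> (\<exists>x. f (x(j := True)) i \<and> \<not> f (x(j := False)) i)"

definition neg_arc :: "'v bnet \<Rightarrow> 'v \<Rightarrow> 'v \<Rightarrow> bool" where
  "neg_arc f j i \<longleftrightarrow> (\<exists>x. \<not> f (x(j := True)) i \<and> f (x(j := False)) i)"

definition sarc :: "'v bnet \<Rightarrow> bool \<Rightarrow> 'v \<Rightarrow> 'v \<Rightarrow> bool" where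
  "sarc f s j i \<longleftrightarrow> (if s then pos_arc f j i else neg_arc f j i)"

definition any_arc :: "'v bnet \<Rightarrow> 'v \<Rightarrow> 'v \<Rightarrow> bool" where
  "any_arc f j i \<longleftrightarrow> pos_arc f j i \<or> neg_arc f j i"

definition and_net :: "'v bnet \<Rightarrow> bool" where
  "and_net f \<longleftrightarrow>
     (\<forall>i j. \<not> (pos_arc f j i \<and> neg_arc f j i)) \<and>
     (\<forall>i x. f x i \<longleftrightarrow>
        \<not> (\<exists>j. pos_arc f j i \<and> \<not> x j) \<and> \<not> (\<exists>j. neg_arc f j i \<and> x j))"

text \<open>Subnetwork induced by I and z: points of {0,1}^I are the extensional
  functions in PiE I (\<lambda>_. UNIV); only the values of z on V - I matter.\<close>
definition subnet :: "'v bnet \<Rightarrow> 'v set \<Rightarrow> ('v \<Rightarrow> bool) \<Rightarrow> ('v \<Rightarrow> bool) \<Rightarrow> ('v \<Rightarrow> bool)" where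
  "subnet f I z y = restrict (f (\<lambda>j. if j \<in> I then y j else z j)) I"

definition subnet_fixpoints :: "'v bnet \<Rightarrow> 'v set \<Rightarrow> ('v \<Rightarrow> bool) \<Rightarrow> ('v \<Rightarrow> bool) set" where
  "subnet_fixpoints f I z = {y \<in> I \<rightarrow>\<^sub>E (UNIV :: bool set). subnet f I z y = y}"

definition is_cycle :: "'v bnet \<Rightarrow> 'v list \<Rightarrow> bool list \<Rightarrow> bool" where
  "is_cycle f vs ss \<longleftrightarrow> vs \<noteq> [] \<and> distinct vs \<and> length ss = length vs \<and>
     (\<forall>t < length vs. sarc f (ss ! t) (vs ! t) (vs ! ((t + 1) mod length vs)))"

definition positive_cycle :: "bool list \<Rightarrow> bool" where
  "positive_cycle ss \<longleftrightarrow> even (length (filter Not ss))"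

definition chordless :: "'v bnet \<Rightarrow> 'v list \<Rightarrow> bool" where
  "chordless f vs \<longleftrightarrow>
     (\<forall>a < length vs. \<forall>b < length vs.
        any_arc f (vs ! a) (vs ! b) \<longrightarrow> b = (a + 1) mod length vs)"

definition delocalizing :: "'v bnet \<Rightarrow> 'v list \<Rightarrow> 'v \<Rightarrow> bool" where
  "delocalizing f vs v \<longleftrightarrow>
     (\<exists>a \<in> set vs. \<exists>b \<in> set vs. a \<noteq> b \<and> pos_arc f v a \<and> neg_arc f v b)"

end

theory Submission
  imports Defs
begin


definition trapc :: "'v set \<Rightarrow> ('v \<Rightarrow> 'v \<Rightarrow> bool) \<Rightarrow> ('v \<Rightarrow> bool) \<Rightarrow> 'v set \<Rightarrow> bool" where
  "trapc I E col R \<longleftrightarrow> (\<forall>r\<in>R. (col r \<longrightarrow> (\<forall>j\<in>I. E j r \<longrightarrow> j \<in> R)) \<and> (\<not> col r \<longrightarrow> (\<exists>j\<in>R. E j r)))"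

lemma core:
  fixes I :: "'v::finite set" and E :: "'v \<Rightarrow> 'v \<Rightarrow> bool" and col :: "'v \<Rightarrow> bool"
  assumes T1: "\<And>R. R \<subseteq> I \<Longrightarrow> R \<noteq> {} \<Longrightarrow> trapc I E col R \<Longrightarrow> R = I"
    and T2: "\<And>R. R \<subseteq> I \<Longrightarrow> R \<noteq> {} \<Longrightarrow> trapc I E (\<lambda>u. \<not> col u) R \<Longrightarrow> R = I"
    and aI: "a \<in> I" and bI: "b \<in> I" and cI: "c \<in> I" and Eb: "E b a" and Ec: "E c a"
    and bc: "b \<noteq> c" and na: "\<not> col a"
  shows False
proof -
  define A where "A = rec_nat {a} (\<lambda>n S. S \<union> {u\<in>I. (\<not> col u \<and> (\<exists>j\<in>S. E j u)) \<or> (col u \<and> (\<forall>j\<in>I. E j u \<longrightarrow> j \<in> S))})"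
  have A0: "A 0 = {a}" by (simp add: A_def)
  have AS: "A (Suc n) = A n \<union> {u\<in>I. (\<not> col u \<and> (\<exists>j\<in>A n. E j u)) \<or> (col u \<and> (\<forall>j\<in>I. E j u \<longrightarrow> j \<in> A n))}" for n
    by (simp add: A_def)
  have AI: "A n \<subseteq> I" for n by (induction n) (auto simp: A0 AS aI)
  have Amono: "m \<le> n \<Longrightarrow> A m \<subseteq> A n" for m n
    by (rule lift_Suc_mono_le[of A]) (auto simp: AS)
  have fin: "finite S \<Longrightarrow> S \<subseteq> (\<Union>n. A n) \<Longrightarrow> \<exists>n. S \<subseteq> A n" for S
  proof (induction S rule: finite_induct)
    case empty then show ?case by auto
  next
    case (insert x F)
    then obtain n where n: "F \<subseteq> A n" by auto
    from insert obtain m where m: "x \<in> A m" by auto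
    have "F \<subseteq> A (max n m)" using n Amono[of n "max n m"] by auto
    moreover have "x \<in> A (max n m)" using m Amono[of m "max n m"] by auto
    ultimately show ?case by blast
  qed
  have U: "I \<subseteq> (\<Union>n. A n)"
  proof (rule ccontr)
    assume nU: "\<not> I \<subseteq> (\<Union>n. A n)"
    define R where "R = I - (\<Union>n. A n)"
    have "R \<noteq> {}" using nU by (auto simp: R_def)
    moreover have "R \<subseteq> I" by (auto simp: R_def)
    moreover have "trapc I E (\<lambda>u. \<not> col u) R"
    proof -
      have P1: "\<forall>j\<in>I. E j r \<longrightarrow> j \<in> R" if rR: "r \<in> R" and ncr: "\<not> col r" for r
      proof (intro ballI impI)
        fix j assume "j \<in> I" "E j r"
        show "j \<in> R"
        proof (rule ccontr)
          assume "j \<notin> R"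
          then obtain n where "j \<in> A n" using \<open>j \<in> I\<close> by (auto simp: R_def)
          then have "r \<in> A (Suc n)" using ncr \<open>E j r\<close> rR by (auto simp: AS R_def)
          then show False using rR by (auto simp: R_def)
        qed
      qed
      have P2: "\<exists>j\<in>R. E j r" if rR: "r \<in> R" and cr: "col r" for r
      proof (rule ccontr)
        assume "\<not> (\<exists>j\<in>R. E j r)"
        then have "{j\<in>I. E j r} \<subseteq> (\<Union>n. A n)" by (auto simp: R_def)
        then obtain n where "{j\<in>I. E j r} \<subseteq> A n" using fin[of "{j\<in>I. E j r}"] by auto
        then have "r \<in> A (Suc n)" using cr rR by (auto simp: AS R_def)
        then show False using rR by (auto simp: R_def)
      qed
      show ?thesis unfolding trapc_def using P1 P2 by auto
    qed
    ultimately have "R = I" using T2 by blast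
    then show False using aI A0 by (auto simp: R_def)
  qed
  have L: "r \<in> A n \<Longrightarrow> r \<noteq> a \<Longrightarrow> \<exists>m. Suc m \<le> n \<and> ((\<not> col r \<and> (\<exists>j\<in>A m. E j r)) \<or> (col r \<and> (\<forall>j\<in>I. E j r \<longrightarrow> j \<in> A m)))" for r n
  proof (induction n)
    case 0 then show ?case by (simp add: A0)
  next
    case (Suc n)
    show ?case
    proof (cases "r \<in> A n")
      case True
      then obtain m where "Suc m \<le> n \<and> ((\<not> col r \<and> (\<exists>j\<in>A m. E j r)) \<or> (col r \<and> (\<forall>j\<in>I. E j r \<longrightarrow> j \<in> A m)))"
        using Suc by blast
      then show ?thesis by (intro exI[of _ m]) auto
    next
      case False
      then show ?thesis using Suc.prems by (intro exI[of _ n]) (auto simp: AS)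
    qed
  qed
  have key: "False" if b'I: "b' \<in> I" and bc': "b' \<noteq> c'" and c'S: "c' \<in> A (Suc n)" and b'n: "b' \<notin> A n"
    and Ec': "E c' a" for b' c' n
  proof -
    define R where "R = A n \<union> {c'}"
    have RI: "R \<subseteq> I" using AI c'S by (auto simp: R_def)
    have "trapc I E col R"
      unfolding trapc_def
    proof (intro ballI)
      fix r assume rR: "r \<in> R"
      show "(col r \<longrightarrow> (\<forall>j\<in>I. E j r \<longrightarrow> j \<in> R)) \<and> (\<not> col r \<longrightarrow> (\<exists>j\<in>R. E j r))"
      proof (cases "r = a")
        case True
        then show ?thesis using na Ec' by (auto simp: R_def)
      next
        case False
        have "r \<in> A (Suc n)" using rR c'S Amono[of n "Suc n"] by (auto simp: R_def)
        then obtain m where m: "Suc m \<le> Suc n" and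
          h: "(\<not> col r \<and> (\<exists>j\<in>A m. E j r)) \<or> (col r \<and> (\<forall>j\<in>I. E j r \<longrightarrow> j \<in> A m))"
          using L False by blast
        have "A m \<subseteq> R" using Amono[of m n] m by (auto simp: R_def)
        then show ?thesis using h by blast
      qed
    qed
    then have "R = I" using T1 RI by (auto simp: R_def)
    then show False using b'I b'n bc' by (auto simp: R_def)
  qed
  have loop: False if "E a a" "d \<in> I" "d \<noteq> a" for d
  proof -
    have "trapc I E col {a}" using that na by (auto simp: trapc_def)
    then have "{a} = I" using T1 aI by auto
    then show False using that by auto
  qed
  show False
  proof (cases "a = b \<or> a = c")
    case True
    then show False using loop Eb Ec bI cI bc by metis
  next
    case False
    have bU: "\<exists>k. b \<in> A k" and cU: "\<exists>k. c \<in> A k" using U bI cI by auto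
    define kb where "kb = (LEAST k. b \<in> A k)"
    define kc where "kc = (LEAST k. c \<in> A k)"
    have bkb: "b \<in> A kb" using bU LeastI_ex kb_def by metis
    have ckc: "c \<in> A kc" using cU LeastI_ex kc_def by metis
    have kb0: "kb \<noteq> 0" using bkb False A0 by auto
    have kc0: "kc \<noteq> 0" using ckc False A0 by auto
    show False
    proof (cases "kc \<le> kb")
      case True
      have "b \<notin> A (kb - 1)" using not_less_Least[of "kb - 1" "\<lambda>k. b \<in> A k"] kb0 kb_def by auto
      moreover have "c \<in> A (Suc (kb - 1))" using ckc Amono[of kc kb] True kb0 by auto
      ultimately show False using key[of b c "kb - 1"] bI bc Ec by auto
    next
      case False
      have "c \<notin> A (kc - 1)" using not_less_Least[of "kc - 1" "\<lambda>k. c \<in> A k"] kc0 kc_def by auto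
      moreover have "b \<in> A (Suc (kc - 1))" using bkb Amono[of kb kc] False kc0 by auto
      ultimately show False using key[of c b "kc - 1"] cI bc Eb by auto
    qed
  qed
qed



lemma AN: "and_net f \<Longrightarrow> f x i = ((\<forall>j. pos_arc f j i \<longrightarrow> x j) \<and> (\<forall>j. neg_arc f j i \<longrightarrow> \<not> x j))"
proof -
  assume "and_net f"
  then have "f x i \<longleftrightarrow> \<not> (\<exists>j. pos_arc f j i \<and> \<not> x j) \<and> \<not> (\<exists>j. neg_arc f j i \<and> x j)"
    unfolding and_net_def by (elim conjE allE)
  then show ?thesis by simp
qed

lemma AN_nb: "and_net f \<Longrightarrow> \<not> (pos_arc f j i \<and> neg_arc f j i)"
  unfolding and_net_def by (elim conjE allE)

lemma dep: "and_net f \<Longrightarrow> (\<And>j. any_arc f j i \<Longrightarrow> x j = y j) \<Longrightarrow> f x i = f y i"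
proof -
  assume an: "and_net f" and h: "\<And>j. any_arc f j i \<Longrightarrow> x j = y j"
  have p: "\<forall>j. pos_arc f j i \<longrightarrow> x j = y j" using h unfolding any_arc_def by blast
  have n: "\<forall>j. neg_arc f j i \<longrightarrow> x j = y j" using h unfolding any_arc_def by blast
  have "((\<forall>j. pos_arc f j i \<longrightarrow> x j) \<and> (\<forall>j. neg_arc f j i \<longrightarrow> \<not> x j)) =
        ((\<forall>j. pos_arc f j i \<longrightarrow> y j) \<and> (\<forall>j. neg_arc f j i \<longrightarrow> \<not> y j))"
    using p n by metis
  then show ?thesis using AN[OF an, of x i] AN[OF an, of y i] by simp
qed

lemma dep_ex: "and_net f \<Longrightarrow> f x i \<noteq> f y i \<Longrightarrow> \<exists>j. any_arc f j i \<and> x j \<noteq> y j"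
proof (rule ccontr)
  assume an: "and_net f" and ne: "f x i \<noteq> f y i" and nex: "\<not> (\<exists>j. any_arc f j i \<and> x j \<noteq> y j)"
  have "f x i = f y i" by (rule dep[OF an]) (use nex in blast)
  then show False using ne by simp
qed

lemma arc_sign: "and_net f \<Longrightarrow> f X i \<noteq> f Y i \<Longrightarrow> X j \<noteq> Y j \<Longrightarrow>
   (pos_arc f j i \<longrightarrow> X j = f X i) \<and> (neg_arc f j i \<longrightarrow> X j \<noteq> f X i)"
proof -
  assume an: "and_net f" and d: "f X i \<noteq> f Y i" and dj: "X j \<noteq> Y j"
  show ?thesis
  proof (cases "f X i")
    case True
    then have "(\<forall>j. pos_arc f j i \<longrightarrow> X j) \<and> (\<forall>j. neg_arc f j i \<longrightarrow> \<not> X j)" using AN[OF an, of X i] by simp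
    then show ?thesis using True by auto
  next
    case False
    then have "f Y i" using d by simp
    then have "(\<forall>j. pos_arc f j i \<longrightarrow> Y j) \<and> (\<forall>j. neg_arc f j i \<longrightarrow> \<not> Y j)" using AN[OF an, of Y i] by simp
    then show ?thesis using False dj by auto
  qed
qed

lemma parity_path: "even (card {t. t < n \<and> h t \<noteq> h (Suc t)}) \<longleftrightarrow> (h 0 = (h n :: bool))"
proof (induction n)
  case 0 then show ?case by simp
next
  case (Suc n)
  show ?case
  proof (cases "h n \<noteq> h (Suc n)")
    case True
    then have "{t. t < Suc n \<and> h t \<noteq> h (Suc t)} = insert n {t. t < n \<and> h t \<noteq> h (Suc t)}"
      by (auto simp: less_Suc_eq)
    then have "card {t. t < Suc n \<and> h t \<noteq> h (Suc t)} = Suc (card {t. t < n \<and> h t \<noteq> h (Suc t)})"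
      by simp
    then show ?thesis using Suc True by auto
  next
    case False
    then have "{t. t < Suc n \<and> h t \<noteq> h (Suc t)} = {t. t < n \<and> h t \<noteq> h (Suc t)}"
      by (auto simp: less_Suc_eq)
    then show ?thesis using Suc False by auto
  qed
qed

lemma parity_cycle:
  assumes k: "length vs = k" "k > 0" and ss: "length ss = k"
    and sst: "\<And>t. t < k \<Longrightarrow> ss ! t = (d (vs ! t) = (d (vs ! ((t + 1) mod k)) :: bool))"
  shows "positive_cycle ss"
proof -
  define h where "h t = d (vs ! (t mod k))" for t
  have "length (filter Not ss) = card {t. t < length ss \<and> \<not> ss ! t}"
    by (simp add: length_filter_conv_card)
  also have "{t. t < length ss \<and> \<not> ss ! t} = {t. t < k \<and> h t \<noteq> h (Suc t)}"
    using sst ss k by (auto simp: h_def)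
  finally have "length (filter Not ss) = card {t. t < k \<and> h t \<noteq> h (Suc t)}" .
  moreover have "h 0 = h k" using k by (simp add: h_def)
  ultimately show ?thesis unfolding positive_cycle_def using parity_path[of k h] by simp
qed



lemma cyc_extract:
  fixes f :: "('v::finite \<Rightarrow> bool) \<Rightarrow> ('v \<Rightarrow> bool)"
  assumes an: "and_net f" and I: "I \<noteq> {}"
    and ex: "\<And>i. i \<in> I \<Longrightarrow> \<exists>j\<in>I. any_arc f j i"
    and un: "\<And>i j1 j2. i \<in> I \<Longrightarrow> j1 \<in> I \<Longrightarrow> j2 \<in> I \<Longrightarrow> any_arc f j1 i \<Longrightarrow> any_arc f j2 i \<Longrightarrow> j1 = j2"
    and out: "\<And>w a b. w \<notin> I \<Longrightarrow> a \<in> I \<Longrightarrow> b \<in> I \<Longrightarrow> pos_arc f w a \<Longrightarrow> neg_arc f w b \<Longrightarrow> False"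
  shows "\<exists>vs ss. is_cycle f vs ss \<and> chordless f vs \<and> set vs \<subseteq> I \<and> (\<forall>v. \<not> delocalizing f vs v) \<and>
           (\<forall>t < length vs. ss ! t = pos_arc f (vs ! t) (vs ! ((t + 1) mod length vs)))"
proof -
  define pr where "pr i = (THE j. j \<in> I \<and> any_arc f j i)" for i
  have prI: "pr i \<in> I \<and> any_arc f (pr i) i" if "i \<in> I" for i
  proof -
    have "\<exists>!j. j \<in> I \<and> any_arc f j i" using ex[OF that] un[OF that] by blast
    then show ?thesis unfolding pr_def by (rule theI')
  qed
  have pr_eq: "j = pr i" if "i \<in> I" "j \<in> I" "any_arc f j i" for i j
    using un[of i j "pr i"] prI[of i] that by blast
  have iterI: "(pr ^^ n) x \<in> I" if "x \<in> I" for n x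
    using that by (induction n) (auto simp: prI)
  obtain a0 where a0: "a0 \<in> I" using I by auto
  define s where "s n = (pr ^^ n) a0" for n
  have "\<not> inj s"
  proof
    assume "inj s"
    moreover have "finite (range s)" by simp
    ultimately have "finite (UNIV :: nat set)" using finite_imageD by blast
    then show False by simp
  qed
  then obtain i j where ij: "i \<noteq> j" "s i = s j" unfolding inj_def by blast
  obtain i' j' where ij': "i' < j'" "s i' = s j'"
    using ij by (cases "i < j") (auto intro: that[of i j] that[of j i])
  define b where "b = s i'"
  have bI: "b \<in> I" using iterI a0 by (simp add: b_def s_def)
  have "(pr ^^ (j' - i')) b = b"
  proof -
    have "(pr ^^ (j' - i')) b = (pr ^^ (j' - i' + i')) a0" by (simp add: b_def s_def funpow_add)
    also have "j' - i' + i' = j'" using ij' by simp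
    finally show ?thesis using ij' by (simp add: b_def s_def)
  qed
  then have exm: "\<exists>m. 0 < m \<and> (pr ^^ m) b = b" using ij' by (intro exI[of _ "j' - i'"]) auto
  define p where "p = (LEAST m. 0 < m \<and> (pr ^^ m) b = b)"
  have p0: "0 < p" and pb: "(pr ^^ p) b = b"
    using LeastI_ex[OF exm] by (auto simp: p_def)
  have pmin: "(pr ^^ m) b \<noteq> b" if "0 < m" "m < p" for m
    using not_less_Least[of m "\<lambda>m. 0 < m \<and> (pr ^^ m) b = b"] that by (auto simp: p_def)
  have einj: "e1 = e2" if "1 \<le> e1" "e1 \<le> p" "1 \<le> e2" "e2 \<le> p" "(pr ^^ e1) b = (pr ^^ e2) b" for e1 e2
  proof (rule ccontr)
    assume ne: "e1 \<noteq> e2"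
    have gen: False if "1 \<le> e1" "e1 < e2" "e2 \<le> p" "(pr ^^ e1) b = (pr ^^ e2) b" for e1 e2
    proof -
      have "(pr ^^ (p - e1)) ((pr ^^ e1) b) = (pr ^^ (p - e1 + e1)) b" by (simp add: funpow_add)
      also have "p - e1 + e1 = p" using that by simp
      finally have L: "(pr ^^ (p - e1)) ((pr ^^ e1) b) = b" using pb by simp
      have "(pr ^^ (p - e1)) ((pr ^^ e2) b) = (pr ^^ (p - e1 + e2)) b" by (simp add: funpow_add)
      also have "p - e1 + e2 = (e2 - e1) + p" using that by simp
      also have "(pr ^^ ((e2 - e1) + p)) b = (pr ^^ (e2 - e1)) b" by (simp add: funpow_add pb)
      finally have R: "(pr ^^ (p - e1)) ((pr ^^ e2) b) = (pr ^^ (e2 - e1)) b" .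
      have "(pr ^^ (e2 - e1)) b = b" using L R that(4) by simp
      moreover have "0 < e2 - e1" "e2 - e1 < p" using that by auto
      ultimately show False using pmin by blast
    qed
    show False
    proof (cases "e1 < e2")
      case True then show False using gen[of e1 e2] that by auto
    next
      case False then have "e2 < e1" using ne by simp
      then show False using gen[of e2 e1] that by auto
    qed
  qed
  define vs where "vs = map (\<lambda>t. (pr ^^ (p - t)) b) [0..<p]"
  have lvs: "length vs = p" by (simp add: vs_def)
  have vsn: "vs ! t = (pr ^^ (p - t)) b" if "t < p" for t using that by (simp add: vs_def)
  have vsI: "vs ! t \<in> I" if "t < p" for t using vsn[OF that] iterI bI by simp
  have dist: "distinct vs"
    unfolding distinct_conv_nth lvs
  proof (intro allI impI)
    fix t1 t2
    assume h: "t1 < p" "t2 < p" "t1 \<noteq> t2"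
    show "vs ! t1 \<noteq> vs ! t2"
    proof
      assume "vs ! t1 = vs ! t2"
      then have "(pr ^^ (p - t1)) b = (pr ^^ (p - t2)) b" using vsn h by simp
      moreover have "1 \<le> p - t1" "p - t1 \<le> p" "1 \<le> p - t2" "p - t2 \<le> p" using h by auto
      ultimately have "p - t1 = p - t2" using einj by blast
      then show False using h by simp
    qed
  qed
  define P where "P y = (if y = 0 then p - 1 else y - 1)" for y
  have P_lt: "P y < p" if "y < p" for y using that p0 by (auto simp: P_def)
  have P_suc: "(P y + 1) mod p = y" if "y < p" for y using that p0 by (auto simp: P_def)
  have prvs: "pr (vs ! y) = vs ! (P y)" if "y < p" for y
  proof (cases "y = 0")
    case True
    have "vs ! 0 = b" using vsn[of 0] p0 pb by simp
    moreover have "vs ! (p - 1) = pr b" using vsn[of "p - 1"] p0 by simp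
    ultimately show ?thesis using True by (simp add: P_def)
  next
    case False
    have "pr (vs ! y) = (pr ^^ (Suc (p - y))) b" using vsn[OF that] by simp
    also have "Suc (p - y) = p - (y - 1)" using False that by simp
    finally show ?thesis using vsn[of "y - 1"] that False by (simp add: P_def)
  qed
  have arcP: "any_arc f (vs ! (P y)) (vs ! y)" if "y < p" for y
    using prI[OF vsI[OF that]] prvs[OF that] by simp
  have predidx: "x = P y" if "x < p" "y < p" "any_arc f (vs ! x) (vs ! y)" for x y
  proof -
    have "vs ! x = pr (vs ! y)" using pr_eq[OF vsI[OF that(2)] vsI[OF that(1)] that(3)] .
    then have "vs ! x = vs ! (P y)" using prvs[OF that(2)] by simp
    then show ?thesis using dist that P_lt[OF that(2)] lvs nth_eq_iff_index_eq by metis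
  qed
  define ss where "ss = map (\<lambda>t. pos_arc f (vs ! t) (vs ! ((t + 1) mod p))) [0..<p]"
  have lss: "length ss = p" by (simp add: ss_def)
  have ssn: "ss ! t = pos_arc f (vs ! t) (vs ! ((t + 1) mod p))" if "t < p" for t
    using that by (simp add: ss_def)
  have arc_t: "any_arc f (vs ! t) (vs ! ((t + 1) mod p))" if "t < p" for t
  proof -
    have "(t + 1) mod p < p" using p0 by simp
    moreover have "P ((t + 1) mod p) = t" using that p0
      by (cases "t + 1 = p") (auto simp: P_def)
    ultimately show ?thesis using arcP by metis
  qed
  have cyc: "is_cycle f vs ss"
    unfolding is_cycle_def
  proof (intro conjI allI impI)
    show "vs \<noteq> []" using lvs p0 by auto
    show "distinct vs" by (rule dist)
    show "length ss = length vs" using lss lvs by simp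
    fix t assume "t < length vs"
    then have t: "t < p" using lvs by simp
    show "sarc f (ss ! t) (vs ! t) (vs ! ((t + 1) mod length vs))"
      using arc_t[OF t] ssn[OF t] lvs unfolding sarc_def any_arc_def by auto
  qed
  have chl: "chordless f vs"
    unfolding chordless_def lvs
  proof (intro allI impI)
    fix x y assume "x < p" "y < p" "any_arc f (vs ! x) (vs ! y)"
    then have "x = P y" using predidx by blast
    then show "y = (x + 1) mod p" using P_suc \<open>y < p\<close> by simp
  qed
  have nodel: "\<not> delocalizing f vs v" for v
  proof
    assume "delocalizing f vs v"
    then obtain a' b' where ab: "a' \<in> set vs" "b' \<in> set vs" "a' \<noteq> b'" "pos_arc f v a'" "neg_arc f v b'"
      unfolding delocalizing_def by blast
    obtain y1 where y1: "y1 < p" "a' = vs ! y1" using ab(1) lvs by (auto simp: in_set_conv_nth)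
    obtain y2 where y2: "y2 < p" "b' = vs ! y2" using ab(2) lvs by (auto simp: in_set_conv_nth)
    show False
    proof (cases "v \<in> I")
      case False
      then show False using out[of v a' b'] ab vsI y1 y2 by auto
    next
      case True
      have "v = pr a'" using pr_eq[of a' v] True ab(4) y1 vsI by (auto simp: any_arc_def)
      moreover have "v = pr b'" using pr_eq[of b' v] True ab(5) y2 vsI by (auto simp: any_arc_def)
      ultimately have "vs ! (P y1) = vs ! (P y2)" using prvs y1 y2 by simp
      then have "P y1 = P y2" using dist P_lt y1 y2 lvs nth_eq_iff_index_eq by metis
      then have "y1 = y2" using P_suc y1 y2 by metis
      then show False using ab y1 y2 by simp
    qed
  qed
  have "set vs \<subseteq> I" using vsI lvs by (auto simp: in_set_conv_nth)
  then show ?thesis using cyc chl nodel ssn lvs by metis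
qed



definition fpon :: "(('v \<Rightarrow> bool) \<Rightarrow> ('v \<Rightarrow> bool)) \<Rightarrow> 'v set \<Rightarrow> ('v \<Rightarrow> bool) \<Rightarrow> bool" where
  "fpon f I x \<longleftrightarrow> (\<forall>i\<in>I. f x i = x i)"

definition inst :: "(('v \<Rightarrow> bool) \<Rightarrow> ('v \<Rightarrow> bool)) \<Rightarrow> 'v set \<Rightarrow> ('v \<Rightarrow> bool) \<Rightarrow> ('v \<Rightarrow> bool) \<Rightarrow> bool" where
  "inst f I x1 x2 \<longleftrightarrow> fpon f I x1 \<and> fpon f I x2 \<and> (\<forall>j. j \<notin> I \<longrightarrow> x1 j = x2 j) \<and> (\<exists>i\<in>I. x1 i \<noteq> x2 i)"

lemma trapc_cong: "(\<And>u. u \<in> R \<Longrightarrow> c u = c' u) \<Longrightarrow> trapc I E c R = trapc I E c' R"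
  unfolding trapc_def by auto

lemma lit_true: "and_net f \<Longrightarrow> f X i \<Longrightarrow> (pos_arc f w i \<longrightarrow> X w) \<and> (neg_arc f w i \<longrightarrow> \<not> X w)"
  using AN[of f X i] by blast

lemma lit_out: "and_net f \<Longrightarrow> f X i \<or> f Y i \<Longrightarrow> X w = Y w \<Longrightarrow> (pos_arc f w i \<longrightarrow> X w) \<and> (neg_arc f w i \<longrightarrow> \<not> X w)"
  using lit_true[of f X i w] lit_true[of f Y i w] by auto

lemma mix:
  assumes an: "and_net f" and f1: "fpon f I x1" and f2: "fpon f I x2" and out: "\<forall>j. j \<notin> I \<longrightarrow> x1 j = x2 j"
    and dif: "\<forall>i\<in>I. x1 i \<noteq> x2 i" and RI: "R \<subseteq> I" and Rne: "R \<noteq> {}" and tr: "trapc I (any_arc f) x2 R"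
  shows "inst f R x1 (\<lambda>j. if j \<in> R then x2 j else x1 j)"
proof -
  define m where "m = (\<lambda>j. if j \<in> R then x2 j else x1 j)"
  have "fpon f R m"
    unfolding fpon_def
  proof
    fix r assume rR: "r \<in> R"
    then have rI: "r \<in> I" using RI by auto
    have mr: "m r = x2 r" using rR by (simp add: m_def)
    show "f m r = m r"
    proof (cases "x2 r")
      case True
      have all: "\<forall>j\<in>I. any_arc f j r \<longrightarrow> j \<in> R" using tr rR True unfolding trapc_def by blast
      have "f m r = f x2 r"
      proof (rule dep[OF an])
        fix j assume aj: "any_arc f j r"
        show "m j = x2 j"
        proof (cases "j \<in> I")
          case True then show ?thesis using all aj by (simp add: m_def)
        next
          case False then have "j \<notin> R" using RI by auto
          then show ?thesis using False out by (simp add: m_def)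
        qed
      qed
      then show ?thesis using f2 rI mr unfolding fpon_def by simp
    next
      case False
      obtain j where jR: "j \<in> R" and aj: "any_arc f j r" using tr rR False unfolding trapc_def by blast
      have x1r: "x1 r" using dif rI False by auto
      have fx1: "f x1 r" using f1 rI x1r unfolding fpon_def by simp
      have jI: "j \<in> I" using jR RI by auto
      have mj: "m j = (\<not> x1 j)" using jR dif jI by (simp add: m_def)
      have "\<not> f m r"
      proof
        assume "f m r"
        then have "(pos_arc f j r \<longrightarrow> m j) \<and> (neg_arc f j r \<longrightarrow> \<not> m j)" using lit_true[OF an] by blast
        moreover have "(pos_arc f j r \<longrightarrow> x1 j) \<and> (neg_arc f j r \<longrightarrow> \<not> x1 j)" using lit_true[OF an fx1] by blast
        ultimately show False using aj mj unfolding any_arc_def by auto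
      qed
      then show ?thesis using mr False by simp
    qed
  qed
  moreover have "fpon f R x1" using f1 RI unfolding fpon_def by auto
  moreover have "\<forall>j. j \<notin> R \<longrightarrow> x1 j = m j" by (simp add: m_def)
  moreover have "\<exists>i\<in>R. x1 i \<noteq> m i" using Rne dif RI by (auto simp: m_def)
  ultimately show ?thesis unfolding inst_def m_def by blast
qed

lemma noinst:
  fixes f :: "('v::finite \<Rightarrow> bool) \<Rightarrow> ('v \<Rightarrow> bool)"
  assumes an: "and_net f"
    and H: "\<forall>vs ss. is_cycle f vs ss \<and> positive_cycle ss \<and> chordless f vs \<longrightarrow> (\<exists>v. delocalizing f vs v)"
  shows "\<not> inst f I x1 x2"
proof (induction "card I" arbitrary: I x1 x2 rule: less_induct)
  case less
  show ?case
  proof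
    assume ins: "inst f I x1 x2"
    then have f1: "fpon f I x1" and f2: "fpon f I x2" and out: "\<forall>j. j \<notin> I \<longrightarrow> x1 j = x2 j"
      and ex1: "\<exists>i\<in>I. x1 i \<noteq> x2 i" unfolding inst_def by auto
    have dif: "\<forall>i\<in>I. x1 i \<noteq> x2 i"
    proof (rule ccontr)
      assume nd: "\<not> (\<forall>i\<in>I. x1 i \<noteq> x2 i)"
      define D where "D = {i\<in>I. x1 i \<noteq> x2 i}"
      have "D \<subset> I" using nd by (auto simp: D_def)
      then have "card D < card I" by (simp add: psubset_card_mono)
      moreover have "inst f D x1 x2" using f1 f2 out ex1 unfolding inst_def fpon_def D_def by auto
      ultimately show False using less by blast
    qed
    have NT2: "R = I" if "R \<subseteq> I" "R \<noteq> {}" "trapc I (any_arc f) x2 R" for R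
    proof (rule ccontr)
      assume "R \<noteq> I"
      then have "card R < card I" using that by (simp add: psubset_card_mono psubsetI)
      moreover have "inst f R x1 (\<lambda>j. if j \<in> R then x2 j else x1 j)"
        using mix[OF an f1 f2 out dif that] .
      ultimately show False using less by blast
    qed
    have NT1: "R = I" if "R \<subseteq> I" "R \<noteq> {}" "trapc I (any_arc f) x1 R" for R
    proof (rule ccontr)
      assume "R \<noteq> I"
      then have "card R < card I" using that by (simp add: psubset_card_mono psubsetI)
      moreover have "inst f R x2 (\<lambda>j. if j \<in> R then x1 j else x2 j)"
        using mix[OF an f2 f1 _ _ that] out dif by auto
      ultimately show False using less by blast
    qed
    have NT2n: "R = I" if "R \<subseteq> I" "R \<noteq> {}" "trapc I (any_arc f) (\<lambda>u. \<not> x2 u) R" for R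
    proof -
      have "\<And>u. u \<in> R \<Longrightarrow> (\<not> x2 u) = x1 u" using that(1) dif by auto
      then have "trapc I (any_arc f) x1 R" using that(3) trapc_cong[of R "\<lambda>u. \<not> x2 u" x1] by simp
      then show ?thesis using NT1 that by blast
    qed
    have NT1n: "R = I" if "R \<subseteq> I" "R \<noteq> {}" "trapc I (any_arc f) (\<lambda>u. \<not> x1 u) R" for R
    proof -
      have "\<And>u. u \<in> R \<Longrightarrow> (\<not> x1 u) = x2 u" using that(1) dif by auto
      then have "trapc I (any_arc f) x2 R" using that(3) trapc_cong[of R "\<lambda>u. \<not> x1 u" x2] by simp
      then show ?thesis using NT2 that by blast
    qed
    have unN: "j1 = j2" if "i \<in> I" "j1 \<in> I" "j2 \<in> I" "any_arc f j1 i" "any_arc f j2 i" for i j1 j2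
    proof (rule ccontr)
      assume ne: "j1 \<noteq> j2"
      show False
      proof (cases "x2 i")
        case True
        then have "\<not> x1 i" using dif that by auto
        then show False using core[of I "any_arc f" x1 i j1 j2] NT1 NT1n that ne by blast
      next
        case False
        then show False using core[of I "any_arc f" x2 i j1 j2] NT2 NT2n that ne by blast
      qed
    qed
    have exN: "\<exists>j\<in>I. any_arc f j i" if "i \<in> I" for i
    proof -
      have "f x1 i \<noteq> f x2 i" using f1 f2 dif that unfolding fpon_def by auto
      then obtain j where "any_arc f j i" "x1 j \<noteq> x2 j" using dep_ex[OF an] by blast
      then show ?thesis using out by blast
    qed
    have lo: "(pos_arc f w a \<longrightarrow> x1 w) \<and> (neg_arc f w a \<longrightarrow> \<not> x1 w)" if "w \<notin> I" "a \<in> I" for w a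
    proof -
      have "f x1 a \<or> f x2 a" using f1 f2 dif that unfolding fpon_def by auto
      then show ?thesis using lit_out[OF an] out that by blast
    qed
    have Ine: "I \<noteq> {}" using ex1 by auto
    have outc: False if "w \<notin> I" "a \<in> I" "b \<in> I" "pos_arc f w a" "neg_arc f w b" for w a b
      using lo[of w a] lo[of w b] that by blast
    obtain vs ss where cyc: "is_cycle f vs ss" and chl: "chordless f vs" and sub: "set vs \<subseteq> I"
      and nd: "\<forall>v. \<not> delocalizing f vs v"
      and ssn: "\<forall>t < length vs. ss ! t = pos_arc f (vs ! t) (vs ! ((t + 1) mod length vs))"
    proof -
      have "\<exists>vs ss. is_cycle f vs ss \<and> chordless f vs \<and> set vs \<subseteq> I \<and> (\<forall>v. \<not> delocalizing f vs v) \<and>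
           (\<forall>t < length vs. ss ! t = pos_arc f (vs ! t) (vs ! ((t + 1) mod length vs)))"
        by (rule cyc_extract[of f I]) (use an Ine exN unN outc in blast)+
      then show ?thesis using that by blast
    qed
    define k where "k = length vs"
    have k0: "k > 0" and lss: "length ss = k" using cyc unfolding is_cycle_def k_def by auto
    have "positive_cycle ss"
    proof (rule parity_cycle[of vs k ss x1])
      show "length vs = k" "0 < k" "length ss = k" using k0 lss k_def by auto
      fix t assume t: "t < k"
      define i where "i = vs ! ((t + 1) mod k)"
      define j where "j = vs ! t"
      have iI: "i \<in> I" using sub k0 unfolding i_def k_def by (auto intro!: nth_mem)
      have jI: "j \<in> I" using sub t unfolding j_def k_def by (auto intro!: nth_mem)
      have arc: "sarc f (ss ! t) j i" using cyc t unfolding is_cycle_def i_def j_def k_def by auto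
      have "f x1 i \<noteq> f x2 i" using f1 f2 dif iI unfolding fpon_def by auto
      then have s: "(pos_arc f j i \<longrightarrow> x1 j = f x1 i) \<and> (neg_arc f j i \<longrightarrow> x1 j \<noteq> f x1 i)"
        using arc_sign[OF an] dif jI by blast
      have fi: "f x1 i = x1 i" using f1 iI unfolding fpon_def by auto
      have "ss ! t = pos_arc f j i" using ssn t unfolding i_def j_def k_def by auto
      then show "ss ! t = (x1 (vs ! t) = x1 (vs ! ((t + 1) mod k)))"
        using arc s fi AN_nb[OF an, of j i] unfolding sarc_def i_def j_def by (cases "ss ! t") auto
    qed
    then show False using H cyc chl nd by blast
  qed
qed



lemma exist_fp:
  fixes f :: "('v::finite \<Rightarrow> bool) \<Rightarrow> ('v \<Rightarrow> bool)"
  assumes an: "and_net f"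
    and H: "\<forall>vs ss. is_cycle f vs ss \<and> chordless f vs \<longrightarrow> (\<exists>v. delocalizing f vs v)"
  shows "I \<noteq> {} \<Longrightarrow> \<exists>x. fpon f I x \<and> (\<forall>j. j \<notin> I \<longrightarrow> x j = z j)"
proof (induction "card I" arbitrary: I z rule: less_induct)
  case less
  have NI: "\<not> inst f I' y1 y2" for I' y1 y2
    using noinst[OF an] H by blast
  show ?case
  proof (rule ccontr)
    assume NF: "\<not> (\<exists>x. fpon f I x \<and> (\<forall>j. j \<notin> I \<longrightarrow> x j = z j))"
    have litok: "(pos_arc f j i \<longrightarrow> z j) \<and> (neg_arc f j i \<longrightarrow> \<not> z j)" if iI: "i \<in> I" and jI: "j \<notin> I" for i j
    proof (rule ccontr)
      assume bad: "\<not> ((pos_arc f j i \<longrightarrow> z j) \<and> (neg_arc f j i \<longrightarrow> \<not> z j))"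
      have zero: "\<not> f x i" if "\<forall>j. j \<notin> I \<longrightarrow> x j = z j" for x
      proof
        assume "f x i"
        then have "(pos_arc f j i \<longrightarrow> x j) \<and> (neg_arc f j i \<longrightarrow> \<not> x j)" using lit_true[OF an] by blast
        then show False using bad that jI by auto
      qed
      show False
      proof (cases "I = {i}")
        case True
        define x where "x = z(i := False)"
        have "fpon f I x" using zero[of x] True by (auto simp: fpon_def x_def)
        moreover have "\<forall>j. j \<notin> I \<longrightarrow> x j = z j" using iI by (auto simp: x_def)
        ultimately show False using NF by blast
      next
        case False
        then have ne: "I - {i} \<noteq> {}" using iI by auto
        have "card (I - {i}) < card I" using iI by (intro card_Diff1_less) auto
        then obtain x where fx: "fpon f (I - {i}) x" and ox: "\<forall>j. j \<notin> I - {i} \<longrightarrow> x j = (z(i := False)) j"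
          using less ne by blast
        have oz: "\<forall>j. j \<notin> I \<longrightarrow> x j = z j" using ox iI by auto
        have xi: "x i = False" using ox by auto
        have "fpon f I x" using fx zero[OF oz] xi unfolding fpon_def by auto
        then show False using NF oz by blast
      qed
    qed
    have pair: "\<exists>X. X v = \<beta> \<and> fpon f (I - {v}) X \<and> (\<forall>j. j \<notin> I \<longrightarrow> X j = z j) \<and> f X v = (\<not> \<beta>)"
      if vI: "v \<in> I" for v \<beta>
    proof (cases "I - {v} = {}")
      case True
      define X where "X = z(v := \<beta>)"
      have "f X v \<noteq> \<beta>"
      proof
        assume "f X v = \<beta>"
        then have "fpon f I X" using True vI by (auto simp: fpon_def X_def)
        moreover have "\<forall>j. j \<notin> I \<longrightarrow> X j = z j" using vI by (auto simp: X_def)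
        ultimately show False using NF by blast
      qed
      then show ?thesis using True vI by (intro exI[of _ X]) (auto simp: X_def fpon_def)
    next
      case False
      have "card (I - {v}) < card I" using vI by (intro card_Diff1_less) auto
      then obtain X where fX: "fpon f (I - {v}) X" and oX: "\<forall>j. j \<notin> I - {v} \<longrightarrow> X j = (z(v := \<beta>)) j"
        using less False by blast
      have Xv: "X v = \<beta>" using oX by auto
      have oz: "\<forall>j. j \<notin> I \<longrightarrow> X j = z j" using oX vI by auto
      have "f X v \<noteq> \<beta>"
      proof
        assume "f X v = \<beta>"
        then have "fpon f I X" using fX Xv unfolding fpon_def by auto
        then show False using NF oz by blast
      qed
      then show ?thesis using Xv fX oz by (intro exI[of _ X]) auto
    qed
    define PP where "PP v X0 X1 \<longleftrightarrow> X0 v = False \<and> X1 v = True \<and> fpon f (I - {v}) X0 \<and> fpon f (I - {v}) X1 \<and>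
       (\<forall>j. j \<notin> I \<longrightarrow> X0 j = z j) \<and> (\<forall>j. j \<notin> I \<longrightarrow> X1 j = z j) \<and> f X0 v = True \<and> f X1 v = False \<and>
       (\<forall>i\<in>I. X0 i \<noteq> X1 i)" for v X0 X1
    have full: "\<exists>XX. PP v (fst XX) (snd XX)" if vI: "v \<in> I" for v
    proof -
      obtain X0 where X0: "X0 v = False" "fpon f (I - {v}) X0" "\<forall>j. j \<notin> I \<longrightarrow> X0 j = z j" "f X0 v = True"
        using pair[OF vI, of False] by auto
      obtain X1 where X1: "X1 v = True" "fpon f (I - {v}) X1" "\<forall>j. j \<notin> I \<longrightarrow> X1 j = z j" "f X1 v = False"
        using pair[OF vI, of True] by auto
      have "\<forall>i\<in>I. X0 i \<noteq> X1 i"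
      proof (rule ccontr)
        assume nd: "\<not> (\<forall>i\<in>I. X0 i \<noteq> X1 i)"
        define D where "D = {i\<in>I. X0 i \<noteq> X1 i}"
        have vD: "v \<in> D" using vI X0 X1 by (auto simp: D_def)
        have "D \<subset> I" using nd by (auto simp: D_def)
        then have "card D < card I" by (simp add: psubset_card_mono)
        then obtain Y where fY: "fpon f D Y" and oY: "\<forall>j. j \<notin> D \<longrightarrow> Y j = X0 j"
          using less vD by blast
        have DI: "D \<subseteq> I" by (auto simp: D_def)
        show False
        proof (cases "Y v")
          case False
          have "\<not> inst f (D - {v}) Y X0" by (rule NI)
          moreover have "fpon f (D - {v}) Y" using fY unfolding fpon_def by auto
          moreover have "fpon f (D - {v}) X0" using X0(2) DI unfolding fpon_def by auto
          moreover have "\<forall>j. j \<notin> D - {v} \<longrightarrow> Y j = X0 j" using oY False X0(1) by auto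
          ultimately have "\<forall>i\<in>D - {v}. Y i = X0 i" unfolding inst_def by blast
          then have "Y = X0" using oY False X0(1) by (auto intro!: ext)
          then show False using fY vD X0 False unfolding fpon_def by auto
        next
          case True
          have "\<not> inst f (D - {v}) Y X1" by (rule NI)
          moreover have "fpon f (D - {v}) Y" using fY unfolding fpon_def by auto
          moreover have "fpon f (D - {v}) X1" using X1(2) DI unfolding fpon_def by auto
          moreover have "\<forall>j. j \<notin> D - {v} \<longrightarrow> Y j = X1 j"
          proof (intro allI impI)
            fix j assume j: "j \<notin> D - {v}"
            show "Y j = X1 j"
            proof (cases "j = v")
              case True then show ?thesis using \<open>Y v\<close> X1(1) by simp
            next
              case False
              then have "j \<notin> D" using j by auto
              then have "Y j = X0 j" using oY by auto
              moreover have "X0 j = X1 j" using \<open>j \<notin> D\<close> X0(3) X1(3) by (cases "j \<in> I") (auto simp: D_def)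
              ultimately show ?thesis by simp
            qed
          qed
          ultimately have eq: "\<forall>i\<in>D - {v}. Y i = X1 i" unfolding inst_def by blast
          have "Y = X1"
          proof
            fix j show "Y j = X1 j"
            proof (cases "j \<in> D - {v}")
              case True then show ?thesis using eq by auto
            next
              case False
              show ?thesis
              proof (cases "j = v")
                case True then show ?thesis using \<open>Y v\<close> X1(1) by simp
              next
                case False
                then have "j \<notin> D" using \<open>j \<notin> D - {v}\<close> by auto
                then show ?thesis using oY X0(3) X1(3) by (cases "j \<in> I") (auto simp: D_def)
              qed
            qed
          qed
          then show False using fY vD X1 True unfolding fpon_def by auto
        qed
      qed
      then have "PP v X0 X1" using X0 X1 by (simp add: PP_def)
      then show ?thesis by (intro exI[of _ "(X0, X1)"]) simp
    qed
    define F0 where "F0 v = fst (SOME XX. PP v (fst XX) (snd XX))" for v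
    define F1 where "F1 v = snd (SOME XX. PP v (fst XX) (snd XX))" for v
    have PF: "PP v (F0 v) (F1 v)" if "v \<in> I" for v
      using someI_ex[OF full[OF that]] unfolding F0_def F1_def .
    have sign: "neg_arc f j i = ((F0 v j \<noteq> F0 v i) \<noteq> (i = v))"
      if "v \<in> I" "i \<in> I" "j \<in> I" "any_arc f j i" for v i j
    proof -
      have P: "PP v (F0 v) (F1 v)" using PF that by blast
      have fi: "f (F0 v) i = (F0 v i \<noteq> (i = v))" and d: "f (F0 v) i \<noteq> f (F1 v) i"
        using P that unfolding PP_def fpon_def by auto
      have dj: "F0 v j \<noteq> F1 v j" using P that unfolding PP_def by auto
      have s: "(pos_arc f j i \<longrightarrow> F0 v j = f (F0 v) i) \<and> (neg_arc f j i \<longrightarrow> F0 v j \<noteq> f (F0 v) i)"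
        using arc_sign[OF an d dj] .
      show ?thesis using s fi that(4) AN_nb[OF an, of j i] unfolding any_arc_def by auto
    qed
    have inb: "\<exists>j\<in>I. any_arc f j i" if "i \<in> I" for i
    proof -
      have P: "PP i (F0 i) (F1 i)" using PF that by blast
      then have "f (F0 i) i \<noteq> f (F1 i) i" unfolding PP_def by auto
      then obtain j where "any_arc f j i" "F0 i j \<noteq> F1 i j" using dep_ex[OF an] by blast
      moreover have "j \<in> I" using P calculation(2) unfolding PP_def by (metis)
      ultimately show ?thesis by blast
    qed
    have ctrap: False if vI: "v \<in> I" and RI: "R \<subseteq> I - {v}" and Rne: "R \<noteq> {}"
      and cl: "\<forall>u\<in>R. \<forall>j\<in>I. any_arc f j u \<longrightarrow> j \<in> R" for v R
    proof -
      have P: "PP v (F0 v) (F1 v)" using PF vI by blast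
      define m where "m = (\<lambda>j. if j \<in> R then F1 v j else F0 v j)"
      have "fpon f R m"
        unfolding fpon_def
      proof
        fix r assume rR: "r \<in> R"
        have "f m r = f (F1 v) r"
        proof (rule dep[OF an])
          fix j assume aj: "any_arc f j r"
          show "m j = F1 v j"
          proof (cases "j \<in> I")
            case True then show ?thesis using cl rR aj by (simp add: m_def)
          next
            case False
            then have "j \<notin> R" using RI by auto
            then show ?thesis using False P unfolding PP_def m_def by auto
          qed
        qed
        also have "\<dots> = F1 v r" using P rR RI unfolding PP_def fpon_def by auto
        finally show "f m r = m r" using rR by (simp add: m_def)
      qed
      moreover have "fpon f R (F0 v)" using P RI unfolding PP_def fpon_def by auto
      moreover have "\<forall>j. j \<notin> R \<longrightarrow> F0 v j = m j" by (simp add: m_def)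
      moreover have "\<exists>i\<in>R. F0 v i \<noteq> m i" using Rne RI P unfolding PP_def m_def by auto
      ultimately have "inst f R (F0 v) m" unfolding inst_def by blast
      then show False using NI by blast
    qed
    have grel: "((F0 v j \<noteq> F0 w j) \<noteq> (F0 v i \<noteq> F0 w i)) = ((i = v) \<noteq> (i = w))"
      if "v \<in> I" "w \<in> I" "i \<in> I" "j \<in> I" "any_arc f j i" for v w i j
      using sign[of v i j] sign[of w i j] that by auto
    have gvw: "(F0 v v \<noteq> F0 w v) \<noteq> (F0 v w \<noteq> F0 w w)" if vwI: "v \<in> I" "w \<in> I" "v \<noteq> w" for v w
    proof
      assume eqg: "(F0 v v \<noteq> F0 w v) = (F0 v w \<noteq> F0 w w)"
      define g where "g u = (F0 v u \<noteq> F0 w u)" for u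
      define R where "R = {u\<in>I. g u \<noteq> g v}"
      have R1: "R \<subseteq> I - {v}" by (auto simp: R_def)
      have cl: "\<forall>u\<in>R. \<forall>j\<in>I. any_arc f j u \<longrightarrow> j \<in> R"
      proof (intro ballI impI)
        fix u j assume uR: "u \<in> R" and jI: "j \<in> I" and a: "any_arc f j u"
        have uv: "u \<noteq> v" "u \<noteq> w" using uR eqg by (auto simp: R_def g_def)
        have "(g j \<noteq> g u) = ((u = v) \<noteq> (u = w))" using grel[of v w u j] vwI jI uR a by (auto simp: g_def R_def)
        then have "g j = g u" using uv by simp
        then show "j \<in> R" using uR jI by (auto simp: R_def)
      qed
      have "R = {}" using ctrap[OF vwI(1) R1 _ cl] by blast
      obtain j where jI: "j \<in> I" and a: "any_arc f j v" using inb vwI(1) by blast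
      have "(g j \<noteq> g v) = ((v = v) \<noteq> (v = w))" using grel[of v w v j] vwI jI a by (auto simp: g_def)
      then have "j \<in> R" using jI vwI(3) by (auto simp: R_def)
      then show False using \<open>R = {}\<close> by simp
    qed
    have unN: "j1 = j2" if ua: "i \<in> I" "j1 \<in> I" "j2 \<in> I" "any_arc f j1 i" "any_arc f j2 i" for i j1 j2
    proof (rule ccontr)
      assume ne: "j1 \<noteq> j2"
      show False
      proof (cases "i = j1 \<or> i = j2")
        case True
        then obtain w where w: "w \<in> I" "w \<noteq> i" "any_arc f i i" using ne ua by auto
        have "((F0 i i \<noteq> F0 w i) \<noteq> (F0 i i \<noteq> F0 w i)) = ((i = i) \<noteq> (i = w))"
          using grel[of i w i i] ua w by blast
        then show False using w by simp
      next
        case False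
        have "((F0 j1 j1 \<noteq> F0 j2 j1) \<noteq> (F0 j1 i \<noteq> F0 j2 i)) = ((i = j1) \<noteq> (i = j2))"
          using grel[of j1 j2 i j1] ua by blast
        moreover have "((F0 j1 j2 \<noteq> F0 j2 j2) \<noteq> (F0 j1 i \<noteq> F0 j2 i)) = ((i = j1) \<noteq> (i = j2))"
          using grel[of j1 j2 i j2] ua by blast
        ultimately have "(F0 j1 j1 \<noteq> F0 j2 j1) = (F0 j1 j2 \<noteq> F0 j2 j2)" using False by auto
        then show False using gvw[of j1 j2] ua ne by blast
      qed
    qed
    have outc: False if "w \<notin> I" "a \<in> I" "b \<in> I" "pos_arc f w a" "neg_arc f w b" for w a b
      using litok[of a w] litok[of b w] that by blast
    have "\<exists>vs ss. is_cycle f vs ss \<and> chordless f vs \<and> set vs \<subseteq> I \<and> (\<forall>v. \<not> delocalizing f vs v) \<and>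
           (\<forall>t < length vs. ss ! t = pos_arc f (vs ! t) (vs ! ((t + 1) mod length vs)))"
      by (rule cyc_extract[of f I]) (use an less.prems inb unN outc in blast)+
    then show False using H by blast
  qed
qed



lemma mod_suc_cases: "t < k \<Longrightarrow> (t + 1) mod (k::nat) = (if t + 1 = k then 0 else t + 1)"
  by auto

lemma mod_suc_inj: "s < k \<Longrightarrow> t < k \<Longrightarrow> (s + 1) mod (k::nat) = (t + 1) mod k \<Longrightarrow> s = t"
  using mod_suc_cases[of s k] mod_suc_cases[of t k] by (auto split: if_splits)

lemma pred_idx: "y < (k::nat) \<Longrightarrow> \<exists>t<k. (t + 1) mod k = y"
  by (cases y) (auto intro: exI[of _ "k - 1"] exI[of _ "y - 1"])

lemma cyc_lit:
  fixes f :: "('v::finite \<Rightarrow> bool) \<Rightarrow> ('v \<Rightarrow> bool)"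
  assumes an: "and_net f" and cyc: "is_cycle f vs ss" and chl: "chordless f vs"
    and nd: "\<forall>v. \<not> delocalizing f vs v"
    and xo: "\<forall>j. j \<notin> set vs \<longrightarrow> x j = (\<exists>a\<in>set vs. pos_arc f j a)"
    and t: "t < length vs"
  shows "f x (vs ! ((t + 1) mod length vs)) = (x (vs ! t) = ss ! t)"
proof -
  define k where "k = length vs"
  define i where "i = vs ! ((t + 1) mod k)"
  have k0: "0 < k" using t unfolding k_def by (cases vs) auto
  have iin: "i \<in> set vs" using k0 by (simp add: i_def k_def)
  have arc: "sarc f (ss ! t) (vs ! t) i" using cyc t unfolding is_cycle_def i_def k_def by auto
  have inner: "j = vs ! t" if jh: "j \<in> set vs" "any_arc f j i" for j
  proof -
    obtain s where s: "s < k" "j = vs ! s" using jh(1) by (auto simp: in_set_conv_nth k_def)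
    have "(t + 1) mod k = (s + 1) mod k"
      using chl s jh(2) k0 unfolding chordless_def i_def k_def by auto
    then have "s = t" using mod_suc_inj[of s k t] s t k_def by simp
    then show ?thesis using s by simp
  qed
  have outer: "(pos_arc f j i \<longrightarrow> x j) \<and> (neg_arc f j i \<longrightarrow> \<not> x j)" if "j \<notin> set vs" for j
  proof (intro conjI impI)
    assume "pos_arc f j i" then show "x j" using xo that iin by auto
  next
    assume ng: "neg_arc f j i"
    show "\<not> x j"
    proof
      assume "x j"
      then obtain a where a: "a \<in> set vs" "pos_arc f j a" using xo \<open>j \<notin> set vs\<close> by auto
      have "a \<noteq> i" using AN_nb[OF an, of j i] a ng by auto
      then have "delocalizing f vs j" unfolding delocalizing_def using a iin ng by blast
      then show False using nd by blast
    qed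
  qed
  have vt: "vs ! t \<in> set vs" using t by simp
  show ?thesis
  proof (cases "ss ! t")
    case True
    then have p: "pos_arc f (vs ! t) i" and np: "\<not> neg_arc f (vs ! t) i"
      using arc AN_nb[OF an, of "vs ! t" i] unfolding sarc_def by auto
    have "f x i = x (vs ! t)"
      unfolding AN[OF an, of x i]
      using p np outer inner unfolding any_arc_def by (metis vt)
    then show ?thesis using True by (simp add: i_def k_def)
  next
    case False
    then have p: "neg_arc f (vs ! t) i" and np: "\<not> pos_arc f (vs ! t) i"
      using arc AN_nb[OF an, of "vs ! t" i] unfolding sarc_def by auto
    have "f x i = (\<not> x (vs ! t))"
      unfolding AN[OF an, of x i]
      using p np outer inner unfolding any_arc_def by (metis vt)
    then show ?thesis using False by (simp add: i_def k_def)
  qed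
qed

lemma sf_iff: "y \<in> subnet_fixpoints f I z \<longleftrightarrow> y \<in> I \<rightarrow>\<^sub>E (UNIV :: bool set) \<and> fpon f I (\<lambda>j. if j \<in> I then y j else z j)"
proof
  assume "y \<in> subnet_fixpoints f I z"
  then have y: "y \<in> I \<rightarrow>\<^sub>E UNIV" and e: "restrict (f (\<lambda>j. if j \<in> I then y j else z j)) I = y"
    unfolding subnet_fixpoints_def subnet_def by auto
  have "fpon f I (\<lambda>j. if j \<in> I then y j else z j)"
    unfolding fpon_def
  proof
    fix i assume iI: "i \<in> I"
    have "restrict (f (\<lambda>j. if j \<in> I then y j else z j)) I i = y i" using e by simp
    then show "f (\<lambda>j. if j \<in> I then y j else z j) i = (if i \<in> I then y i else z i)" using iI by simp
  qed
  then show "y \<in> I \<rightarrow>\<^sub>E UNIV \<and> fpon f I (\<lambda>j. if j \<in> I then y j else z j)" using y by simp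
next
  assume h: "y \<in> I \<rightarrow>\<^sub>E UNIV \<and> fpon f I (\<lambda>j. if j \<in> I then y j else z j)"
  have "restrict (f (\<lambda>j. if j \<in> I then y j else z j)) I = y"
  proof
    fix i show "restrict (f (\<lambda>j. if j \<in> I then y j else z j)) I i = y i"
    proof (cases "i \<in> I")
      case True then show ?thesis using h unfolding fpon_def by auto
    next
      case False then show ?thesis using h by (auto simp: PiE_def extensional_def)
    qed
  qed
  then show "y \<in> subnet_fixpoints f I z" using h unfolding subnet_fixpoints_def subnet_def by auto
qed

lemma sf_of_full: "fpon f I x \<Longrightarrow> (\<forall>j. j \<notin> I \<longrightarrow> x j = z j) \<Longrightarrow> restrict x I \<in> subnet_fixpoints f I z"
proof -
  assume a: "fpon f I x" "\<forall>j. j \<notin> I \<longrightarrow> x j = z j"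
  have "(\<lambda>j. if j \<in> I then restrict x I j else z j) = x" using a(2) by (auto intro!: ext)
  then show ?thesis using a(1) by (simp add: sf_iff)
qed

lemma sf_unique:
  fixes f :: "('v::finite \<Rightarrow> bool) \<Rightarrow> ('v \<Rightarrow> bool)"
  assumes an: "and_net f"
    and H: "\<forall>vs ss. is_cycle f vs ss \<and> positive_cycle ss \<and> chordless f vs \<longrightarrow> (\<exists>v. delocalizing f vs v)"
    and y1: "y1 \<in> subnet_fixpoints f I z" and y2: "y2 \<in> subnet_fixpoints f I z"
  shows "y1 = y2"
proof (rule ccontr)
  assume ne: "y1 \<noteq> y2"
  have e1: "y1 \<in> I \<rightarrow>\<^sub>E UNIV" and e2: "y2 \<in> I \<rightarrow>\<^sub>E UNIV" using y1 y2 by (auto simp: sf_iff)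
  obtain i where i: "y1 i \<noteq> y2 i" using ne by auto
  have iI: "i \<in> I"
  proof (rule ccontr)
    assume "i \<notin> I" then show False using i e1 e2 by (auto simp: PiE_def extensional_def)
  qed
  have "inst f I (\<lambda>j. if j \<in> I then y1 j else z j) (\<lambda>j. if j \<in> I then y2 j else z j)"
    using y1 y2 iI i unfolding sf_iff inst_def by auto
  then show False using noinst[OF an H] by blast
qed

lemma neg_fp:
  fixes f :: "('v::finite \<Rightarrow> bool) \<Rightarrow> ('v \<Rightarrow> bool)"
  assumes an: "and_net f" and cyc: "is_cycle f vs ss" and chl: "chordless f vs"
    and nd: "\<forall>v. \<not> delocalizing f vs v"
    and xo: "\<forall>j. j \<notin> set vs \<longrightarrow> x j = (\<exists>a\<in>set vs. pos_arc f j a)"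
    and fx: "fpon f (set vs) x"
  shows "fpon f (set vs) (\<lambda>j. if j \<in> set vs then \<not> x j else x j)"
proof -
  define x' where "x' = (\<lambda>j. if j \<in> set vs then \<not> x j else x j)"
  have xo': "\<forall>j. j \<notin> set vs \<longrightarrow> x' j = (\<exists>a\<in>set vs. pos_arc f j a)" using xo by (simp add: x'_def)
  have "f x' i = x' i" if iv: "i \<in> set vs" for i
  proof -
    obtain y where y: "y < length vs" "i = vs ! y" using iv by (auto simp: in_set_conv_nth)
    obtain t where t: "t < length vs" "(t + 1) mod length vs = y" using pred_idx[OF y(1)] by blast
    have "f x' i = (x' (vs ! t) = ss ! t)" using cyc_lit[OF an cyc chl nd xo' t(1)] t y by simp
    also have "\<dots> = (\<not> (x (vs ! t) = ss ! t))" using t by (auto simp: x'_def)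
    also have "(x (vs ! t) = ss ! t) = f x i" using cyc_lit[OF an cyc chl nd xo t(1)] t y by simp
    also have "f x i = x i" using fx iv unfolding fpon_def by auto
    finally show ?thesis using iv by (simp add: x'_def)
  qed
  then show ?thesis unfolding fpon_def x'_def by auto
qed

lemma pos_fp:
  fixes f :: "('v::finite \<Rightarrow> bool) \<Rightarrow> ('v \<Rightarrow> bool)"
  assumes an: "and_net f" and cyc: "is_cycle f vs ss" and chl: "chordless f vs"
    and nd: "\<forall>v. \<not> delocalizing f vs v" and pc: "positive_cycle ss"
  shows "\<exists>x. fpon f (set vs) x \<and> (\<forall>j. j \<notin> set vs \<longrightarrow> x j = (\<exists>a\<in>set vs. pos_arc f j a))"
proof -
  define k where "k = length vs"
  have lss: "length ss = k" and dist: "distinct vs" and k0: "0 < k" using cyc unfolding is_cycle_def k_def by auto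
  define Q where "Q t = even (length (filter Not (take t ss)))" for t
  have Qs: "Q (Suc u) = (Q u = ss ! u)" if "u < k" for u
    using that lss by (auto simp: Q_def take_Suc_conv_app_nth)
  have Q0: "Q 0" by (simp add: Q_def)
  have Qk: "Q k" using pc lss by (simp add: Q_def positive_cycle_def)
  define idx where "idx j = (THE t. t < k \<and> vs ! t = j)" for j
  have idx: "idx (vs ! t) = t" if "t < k" for t
    unfolding idx_def using dist that k_def by (auto simp: nth_eq_iff_index_eq intro!: the_equality)
  define x where "x j = (if j \<in> set vs then Q (idx j) else (\<exists>a\<in>set vs. pos_arc f j a))" for j
  have xo: "\<forall>j. j \<notin> set vs \<longrightarrow> x j = (\<exists>a\<in>set vs. pos_arc f j a)" by (simp add: x_def)
  have "f x i = x i" if iv: "i \<in> set vs" for i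
  proof -
    obtain y where y: "y < k" "i = vs ! y" using iv by (auto simp: in_set_conv_nth k_def)
    obtain t where t: "t < k" "(t + 1) mod k = y" using pred_idx[OF y(1)] by blast
    have "f x i = (x (vs ! t) = ss ! t)" using cyc_lit[OF an cyc chl nd xo, of t] t y k_def by simp
    also have "\<dots> = (Q t = ss ! t)" using t by (simp add: x_def idx k_def)
    also have "\<dots> = Q (Suc t)" using Qs t by simp
    also have "\<dots> = Q y"
      using t Q0 Qk mod_suc_cases[of t k] by (auto split: if_splits)
    also have "\<dots> = x i" using y by (simp add: x_def idx k_def)
    finally show ?thesis .
  qed
  then have "fpon f (set vs) x" unfolding fpon_def by auto
  then show ?thesis using xo by blast
qed

theorem corollary12:
  fixes f :: "('v::finite \<Rightarrow> bool) \<Rightarrow> ('v \<Rightarrow> bool)"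
  assumes "and_net f"
  shows "((\<forall>I z. I \<noteq> {} \<longrightarrow> (\<exists>!y. y \<in> subnet_fixpoints f I z)) \<longleftrightarrow>
           (\<forall>vs ss. is_cycle f vs ss \<and> chordless f vs \<longrightarrow> (\<exists>v. delocalizing f vs v)))
       \<and> ((\<forall>I z. I \<noteq> {} \<longrightarrow>
              (\<forall>y1 \<in> subnet_fixpoints f I z. \<forall>y2 \<in> subnet_fixpoints f I z. y1 = y2)) \<longleftrightarrow>
           (\<forall>vs ss. is_cycle f vs ss \<and> positive_cycle ss \<and> chordless f vs
                     \<longrightarrow> (\<exists>v. delocalizing f vs v)))"
proof -
  note an = assms
  have two: False if cyc: "is_cycle f vs ss" and chl: "chordless f vs" and nd: "\<forall>v. \<not> delocalizing f vs v"
    and x: "fpon f (set vs) x" and xo: "\<forall>j. j \<notin> set vs \<longrightarrow> x j = (\<exists>a\<in>set vs. pos_arc f j a)"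
    and uq: "\<forall>y1 \<in> subnet_fixpoints f (set vs) (\<lambda>w. \<exists>a\<in>set vs. pos_arc f w a).
             \<forall>y2 \<in> subnet_fixpoints f (set vs) (\<lambda>w. \<exists>a\<in>set vs. pos_arc f w a). y1 = y2" for vs ss x
  proof -
    define z where "z = (\<lambda>w. \<exists>a\<in>set vs. pos_arc f w a)"
    define x' where "x' = (\<lambda>j. if j \<in> set vs then \<not> x j else x j)"
    have fx': "fpon f (set vs) x'" using neg_fp[OF an cyc chl nd xo x] by (simp add: x'_def)
    have xo': "\<forall>j. j \<notin> set vs \<longrightarrow> x' j = z j" using xo by (simp add: x'_def z_def)
    have s1: "restrict x (set vs) \<in> subnet_fixpoints f (set vs) z" using sf_of_full[OF x] xo z_def by simp
    have s2: "restrict x' (set vs) \<in> subnet_fixpoints f (set vs) z" using sf_of_full[OF fx' xo'] .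
    have "vs \<noteq> []" using cyc unfolding is_cycle_def by auto
    then have h: "hd vs \<in> set vs" by simp
    have "restrict x (set vs) (hd vs) \<noteq> restrict x' (set vs) (hd vs)" using h by (simp add: x'_def)
    then show False using uq s1 s2 unfolding z_def by metis
  qed
  have P2: "(\<forall>I z. I \<noteq> {} \<longrightarrow>
              (\<forall>y1 \<in> subnet_fixpoints f I z. \<forall>y2 \<in> subnet_fixpoints f I z. y1 = y2)) \<longleftrightarrow>
           (\<forall>vs ss. is_cycle f vs ss \<and> positive_cycle ss \<and> chordless f vs
                     \<longrightarrow> (\<exists>v. delocalizing f vs v))" (is "?L \<longleftrightarrow> ?R")
  proof
    assume L: ?L
    show ?R
    proof (intro allI impI)
      fix vs ss assume h: "is_cycle f vs ss \<and> positive_cycle ss \<and> chordless f vs"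
      show "\<exists>v. delocalizing f vs v"
      proof (rule ccontr)
        assume "\<not> (\<exists>v. delocalizing f vs v)"
        then have nd: "\<forall>v. \<not> delocalizing f vs v" by blast
        obtain x where x: "fpon f (set vs) x" "\<forall>j. j \<notin> set vs \<longrightarrow> x j = (\<exists>a\<in>set vs. pos_arc f j a)"
          using pos_fp[OF an _ _ nd] h by blast
        have "set vs \<noteq> {}" using h unfolding is_cycle_def by auto
        then show False using two[of vs ss x] h nd x L by blast
      qed
    qed
  next
    assume R: ?R
    show ?L using sf_unique[OF an R] by blast
  qed
  have P1: "(\<forall>I z. I \<noteq> {} \<longrightarrow> (\<exists>!y. y \<in> subnet_fixpoints f I z)) \<longleftrightarrow>
           (\<forall>vs ss. is_cycle f vs ss \<and> chordless f vs \<longrightarrow> (\<exists>v. delocalizing f vs v))" (is "?L \<longleftrightarrow> ?R")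
  proof
    assume L: ?L
    show ?R
    proof (intro allI impI)
      fix vs ss assume h: "is_cycle f vs ss \<and> chordless f vs"
      show "\<exists>v. delocalizing f vs v"
      proof (rule ccontr)
        assume "\<not> (\<exists>v. delocalizing f vs v)"
        then have nd: "\<forall>v. \<not> delocalizing f vs v" by blast
        define z where "z = (\<lambda>w. \<exists>a\<in>set vs. pos_arc f w a)"
        have "set vs \<noteq> {}" using h unfolding is_cycle_def by auto
        then obtain y where y: "y \<in> subnet_fixpoints f (set vs) z"
          and yu: "\<And>y'. y' \<in> subnet_fixpoints f (set vs) z \<Longrightarrow> y' = y" using L by metis
        define x where "x = (\<lambda>j. if j \<in> set vs then y j else z j)"
        have x: "fpon f (set vs) x" using y by (simp add: sf_iff x_def)
        have xo: "\<forall>j. j \<notin> set vs \<longrightarrow> x j = (\<exists>a\<in>set vs. pos_arc f j a)" by (simp add: x_def z_def)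
        have uq: "\<forall>y1 \<in> subnet_fixpoints f (set vs) z. \<forall>y2 \<in> subnet_fixpoints f (set vs) z. y1 = y2"
          using yu by metis
        show False using two[of vs ss x] h nd x xo uq unfolding z_def by blast
      qed
    qed
  next
    assume R: ?R
    have R2: "\<forall>vs ss. is_cycle f vs ss \<and> positive_cycle ss \<and> chordless f vs \<longrightarrow> (\<exists>v. delocalizing f vs v)"
      using R by blast
    show ?L
    proof (intro allI impI)
      fix I :: "'v set" and z assume I: "I \<noteq> {}"
      obtain x where "fpon f I x" "\<forall>j. j \<notin> I \<longrightarrow> x j = z j" using exist_fp[OF an R I] by blast
      then have "restrict x I \<in> subnet_fixpoints f I z" by (rule sf_of_full)
      then show "\<exists>!y. y \<in> subnet_fixpoints f I z" using sf_unique[OF an R2] by blast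
    qed
  qed
  show ?thesis using P1 P2 by blast
qed

end
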